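(* Let $X,Y,Z$ be random variables on finite alphabets $\mathcal{X},\mathcal{Y},\mathcal{Z}$. For each $y\in\mathcal{Y}$ with $\Pr(Y=y)>0$, let $(A_y,B_y,C_y)$ be the random triple on $\mathcal{X}\times\mathcal{Y}\times\mathcal{Z}$ with $$\Pr(A_y=x,B_y=y',C_y=z)=\begin{cases}0 & \text{if } \Pr(Z=z)=0,\\ \dfrac{\Pr(X=x,Y=y',Z=z)\,\Pr(Z=z\mid Y=y)}{\Pr(Z=z)} & \text{otherwise.}\end{cases}$$ Let $A_{Z|Y}$ be the random variable on $\mathcal{X}$ with $\Pr(A_{Z|Y}=x)=\sum_{y:\Pr(Y=y)>0}\Pr(Y=y)\Pr(A_y=x)$. Then $H(A_{Z|Y})=H(X)$.
   Context: $H$ denotes Shannon entropy. *)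

theory Defs
  imports "HOL-Probability.Probability"
begin

definition shannon_entropy :: "('a::finite \<Rightarrow> real) \<Rightarrow> real" where
  "shannon_entropy f = - (\<Sum>x | f x \<noteq> 0. f x * log 2 (f x))"

definition pX :: "('x::finite \<times> 'y::finite \<times> 'z::finite) pmf \<Rightarrow> 'x \<Rightarrow> real" where
  "pX P x = (\<Sum>y\<in>UNIV. \<Sum>z\<in>UNIV. pmf P (x, y, z))"

definition pY :: "('x::finite \<times> 'y::finite \<times> 'z::finite) pmf \<Rightarrow> 'y \<Rightarrow> real" where
  "pY P y = (\<Sum>x\<in>UNIV. \<Sum>z\<in>UNIV. pmf P (x, y, z))"

definition pZ :: "('x::finite \<times> 'y::finite \<times> 'z::finite) pmf \<Rightarrow> 'z \<Rightarrow> real" where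
  "pZ P z = (\<Sum>x\<in>UNIV. \<Sum>y\<in>UNIV. pmf P (x, y, z))"

definition pYZ :: "('x::finite \<times> 'y::finite \<times> 'z::finite) pmf \<Rightarrow> 'y \<Rightarrow> 'z \<Rightarrow> real" where
  "pYZ P y z = (\<Sum>x\<in>UNIV. pmf P (x, y, z))"

text \<open>Pr(Z = z | Y = y), used only when Pr(Y = y) > 0.\<close>
definition condZY :: "('x::finite \<times> 'y::finite \<times> 'z::finite) pmf \<Rightarrow> 'z \<Rightarrow> 'y \<Rightarrow> real" where
  "condZY P z y = pYZ P y z / pY P y"

definition A_triple :: "('x::finite \<times> 'y::finite \<times> 'z::finite) pmf \<Rightarrow> 'y \<Rightarrow> 'x \<Rightarrow> 'y \<Rightarrow> 'z \<Rightarrow> real" where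
  "A_triple P y x y' z =
     (if pZ P z = 0 then 0 else pmf P (x, y', z) * condZY P z y / pZ P z)"

definition A_marg :: "('x::finite \<times> 'y::finite \<times> 'z::finite) pmf \<Rightarrow> 'y \<Rightarrow> 'x \<Rightarrow> real" where
  "A_marg P y x = (\<Sum>y'\<in>UNIV. \<Sum>z\<in>UNIV. A_triple P y x y' z)"

definition A_ZY :: "('x::finite \<times> 'y::finite \<times> 'z::finite) pmf \<Rightarrow> 'x \<Rightarrow> real" where
  "A_ZY P x = (\<Sum>y | pY P y > 0. pY P y * A_marg P y x)"

end

theory Submission
  imports Defs
begin

lemma pYZ_nonneg: "pYZ P y z \<ge> 0"
  unfolding pYZ_def by (simp add: sum_nonneg)

lemma pYZ_le: "pYZ P y z \<le> pY P y"
  unfolding pY_def pYZ_def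
proof -
  have "(\<Sum>x\<in>UNIV. pmf P (x, y, z)) = (\<Sum>x\<in>UNIV. \<Sum>z'\<in>{z}. pmf P (x, y, z'))" by simp
  also have "\<dots> \<le> (\<Sum>x\<in>UNIV. \<Sum>z'\<in>UNIV. pmf P (x, y, z'))"
    by (intro sum_mono sum_mono2) auto
  finally show "(\<Sum>x\<in>UNIV. pmf P (x, y, z)) \<le> (\<Sum>x\<in>UNIV. \<Sum>z\<in>UNIV. pmf P (x, y, z))" .
qed

lemma pY_nonneg: "pY P y \<ge> 0"
  unfolding pY_def by (simp add: sum_nonneg)

lemma pmf_le_pZ: "pmf P (x, y, z) \<le> pZ P z"
proof -
  have "pmf P (x, y, z) = (\<Sum>x'\<in>{x}. \<Sum>y'\<in>{y}. pmf P (x', y', z))" by simp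
  also have "\<dots> \<le> (\<Sum>x'\<in>UNIV. \<Sum>y'\<in>{y}. pmf P (x', y', z))"
    by (intro sum_mono2) (auto intro: sum_nonneg)
  also have "\<dots> \<le> (\<Sum>x'\<in>UNIV. \<Sum>y'\<in>UNIV. pmf P (x', y', z))"
    by (intro sum_mono sum_mono2) auto
  finally show ?thesis unfolding pZ_def .
qed

lemma sum_pYZ: "(\<Sum>y\<in>UNIV. pYZ P y z) = pZ P z"
  unfolding pYZ_def pZ_def by (rule sum.swap)

lemma A_ZY_eq: "A_ZY P x = pX P x"
proof -
  define f where "f y' z = (if pZ P z = 0 then 0 else pmf P (x, y', z) / pZ P z)" for y' z
  have 1: "A_ZY P x = (\<Sum>y\<in>UNIV. pY P y * A_marg P y x)"
    unfolding A_ZY_def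
    apply (rule sum.mono_neutral_left)
    using pY_nonneg[of P] by (auto simp: le_less)
  have 2: "pY P y * A_marg P y x = (\<Sum>y'\<in>UNIV. \<Sum>z\<in>UNIV. f y' z * pYZ P y z)" for y
  proof (cases "pY P y = 0")
    case True
    then have "pYZ P y z = 0" for z using pYZ_le[of P y z] pYZ_nonneg[of P y z] by simp
    then show ?thesis using True by simp
  next
    case False
    show ?thesis unfolding A_marg_def A_triple_def condZY_def f_def
      by (simp add: sum_distrib_left False) (intro sum.cong refl, simp add: False field_simps)
  qed
  have "A_ZY P x = (\<Sum>y\<in>UNIV. \<Sum>y'\<in>UNIV. \<Sum>z\<in>UNIV. f y' z * pYZ P y z)"
    using 1 2 by simp
  also have "\<dots> = (\<Sum>y'\<in>UNIV. \<Sum>y\<in>UNIV. \<Sum>z\<in>UNIV. f y' z * pYZ P y z)"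
    by (rule sum.swap)
  also have "\<dots> = (\<Sum>y'\<in>UNIV. \<Sum>z\<in>UNIV. \<Sum>y\<in>UNIV. f y' z * pYZ P y z)"
    by (intro sum.cong refl sum.swap)
  also have "\<dots> = (\<Sum>y'\<in>UNIV. \<Sum>z\<in>UNIV. f y' z * pZ P z)"
    by (simp add: sum_distrib_left[symmetric] sum_pYZ)
  also have "\<dots> = (\<Sum>y'\<in>UNIV. \<Sum>z\<in>UNIV. pmf P (x, y', z))"
  proof (intro sum.cong refl)
    fix y' z
    show "f y' z * pZ P z = pmf P (x, y', z)"
    proof (cases "pZ P z = 0")
      case True
      then show ?thesis using pmf_le_pZ[of P x y' z] pmf_nonneg[of P "(x,y',z)"]
        by (simp add: f_def)
    qed (simp add: f_def)
  qed
  finally show ?thesis unfolding pX_def .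
qed

theorem lemma2:
  fixes P :: "('x::finite \<times> 'y::finite \<times> 'z::finite) pmf"
  shows "shannon_entropy (A_ZY P) = shannon_entropy (pX P)"
proof -
  have "A_ZY P = pX P" by (rule ext) (rule A_ZY_eq)
  then show ?thesis by simp
qed

end
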